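(* Let $S$ be an additively reduced semidomain and $G$ a torsion-free abelian group, totally ordered compatibly with addition, in which every subset that is bounded below is well-ordered. Let $f=\sum_{i=0}^\infty s_ix^{g_i}\in S[\![G]\!]$ with $s_i\neq0$ for all $i\in\mathbb{N}_0$. If for some $N\in\mathbb{N}_0$ the sequence $(g_{N+i+1}-g_{N+i})_{i\in\mathbb{N}_0}$ is strictly increasing, then $f$ is monolithic.
   Context: A semidomain is a subsemiring (containing $0$ and $1$) of an integral domain. $S$ is additively reduced if $0$ is the only invertible element of $(S,+)$. $S[\![G]\!]=\{\sum_{i=0}^\infty s_ix^{g_i} : s_i\in S,\ g_i\in G,\ g_i<g_{i+1}\}$ (with respect to the given order on $G$) with operations defined as for polynomials. A nonzero $f$ is monolithic if $f=pq$ with $p,q\in S[\![G]\!]$ implies one of $p,q$ is a monomial $sx^g$. *)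

theory Defs
  imports Main
begin

definition semidomain :: "'a::idom set \<Rightarrow> bool" where
  "semidomain S \<longleftrightarrow> 0 \<in> S \<and> 1 \<in> S \<and>
     (\<forall>x\<in>S. \<forall>y\<in>S. x + y \<in> S \<and> x * y \<in> S)"

definition additively_reduced :: "'a::idom set \<Rightarrow> bool" where
  "additively_reduced S \<longleftrightarrow> (\<forall>x\<in>S. (\<exists>y\<in>S. x + y = 0) \<longrightarrow> x = 0)"

definition bdd_below_well_ordered :: "'g::linorder itself \<Rightarrow> bool" where
  "bdd_below_well_ordered _ \<longleftrightarrow>
     (\<forall>A::'g set. bdd_below A \<longrightarrow>
        (\<forall>B\<subseteq>A. B \<noteq> {} \<longrightarrow> (\<exists>m\<in>B. \<forall>b\<in>B. m \<le> b)))"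

text \<open>Elements of S[[G]] are represented by their coefficient functions G \<Rightarrow> A.\<close>
definition gen_series :: "'a::idom set \<Rightarrow> ('g::linorder \<Rightarrow> 'a) set" where
  "gen_series S = {f. (\<forall>h. f h \<in> S) \<and>
      (finite {h. f h \<noteq> 0} \<or> (\<exists>g::nat \<Rightarrow> 'g. strict_mono g \<and> {h. f h \<noteq> 0} \<subseteq> range g))}"

definition series_mult :: "('g::ab_group_add \<Rightarrow> 'a::idom) \<Rightarrow> ('g \<Rightarrow> 'a) \<Rightarrow> 'g \<Rightarrow> 'a" where
  "series_mult p q = (\<lambda>c. \<Sum>a\<in>{a. p a \<noteq> 0 \<and> q (c - a) \<noteq> 0}. p a * q (c - a))"

definition is_monomial :: "('g \<Rightarrow> 'a::zero) \<Rightarrow> bool" where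
  "is_monomial p \<longleftrightarrow> (\<exists>g. \<forall>h. h \<noteq> g \<longrightarrow> p h = 0)"

definition monolithic :: "'a::idom set \<Rightarrow> ('g::{linorder,ab_group_add} \<Rightarrow> 'a) \<Rightarrow> bool" where
  "monolithic S f \<longleftrightarrow> f \<noteq> (\<lambda>_. 0) \<and>
     (\<forall>p\<in>gen_series S. \<forall>q\<in>gen_series S. f = series_mult p q \<longrightarrow> is_monomial p \<or> is_monomial q)"

end

theory Submission
  imports Defs
begin

lemma no_bounded_smono:
  fixes h :: "nat \<Rightarrow> 'g::linordered_ab_group_add"
  assumes wo: "bdd_below_well_ordered TYPE('g)" and sm: "strict_mono h"
    and bd: "\<forall>n. h n \<le> U"
  shows False
proof -
  let ?B = "range (\<lambda>n. U - h n)"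
  have "bdd_below ?B" using bd by (auto simp: bdd_below_def intro!: exI[of _ 0])
  with wo obtain m where m: "m \<in> ?B" "\<forall>b\<in>?B. m \<le> b"
    unfolding bdd_below_well_ordered_def by (metis empty_not_UNIV image_is_empty subset_refl)
  then obtain n where "m = U - h n" by auto
  moreover have "h n < h (Suc n)" using sm by (simp add: strict_mono_def)
  moreover have "m \<le> U - h (Suc n)" using m by auto
  ultimately show False by simp
qed

lemma finite_below:
  fixes h :: "nat \<Rightarrow> 'g::linordered_ab_group_add"
  assumes wo: "bdd_below_well_ordered TYPE('g)" and sm: "strict_mono h"
  shows "finite {n. h n \<le> U}"
proof (rule ccontr)
  assume inf: "infinite {n. h n \<le> U}"
  have "\<forall>n. h n \<le> U"
  proof
    fix n
    obtain m where "m \<ge> n" "h m \<le> U" using inf unfolding finite_nat_set_iff_bounded_le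
      by (auto simp: not_le intro: less_imp_le)
    moreover have "h n \<le> h m" using sm \<open>m \<ge> n\<close> by (simp add: strict_mono_less_eq)
    ultimately show "h n \<le> U" by simp
  qed
  then show False using no_bounded_smono[OF wo sm] by blast
qed

lemma mult_finite:
  fixes p q :: "'g::linordered_ab_group_add \<Rightarrow> 'a::idom"
  assumes wo: "bdd_below_well_ordered TYPE('g)"
    and p: "p \<in> gen_series S" and q: "q \<in> gen_series S"
  shows "finite {a. p a \<noteq> 0 \<and> q (c - a) \<noteq> 0}"
proof -
  consider "finite {h. p h \<noteq> 0}" | "finite {h. q h \<noteq> 0}"
    | gp gq :: "nat \<Rightarrow> 'g" where "strict_mono gp" "{h. p h \<noteq> 0} \<subseteq> range gp"
        "strict_mono gq" "{h. q h \<noteq> 0} \<subseteq> range gq"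
  proof -
    have "finite {h. p h \<noteq> 0} \<or> (\<exists>g::nat \<Rightarrow> 'g. strict_mono g \<and> {h. p h \<noteq> 0} \<subseteq> range g)"
      "finite {h. q h \<noteq> 0} \<or> (\<exists>g::nat \<Rightarrow> 'g. strict_mono g \<and> {h. q h \<noteq> 0} \<subseteq> range g)"
      using p q unfolding gen_series_def by auto
    then show thesis
    proof (elim disjE exE conjE)
      fix gp gq :: "nat \<Rightarrow> 'g"
      assume "strict_mono gp" "{h. p h \<noteq> 0} \<subseteq> range gp" "strict_mono gq" "{h. q h \<noteq> 0} \<subseteq> range gq"
      then show thesis by (rule that(3))
    qed (use that in blast)+
  qed
  then show ?thesis
  proof cases
    case 1 then show ?thesis by (rule rev_finite_subset) auto
  next
    case 2
    have "{a. p a \<noteq> 0 \<and> q (c - a) \<noteq> 0} \<subseteq> (\<lambda>b. c - b) ` {h. q h \<noteq> 0}"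
      by (auto intro!: image_eqI[where x="c - _"])
    then show ?thesis using 2 by (meson finite_imageI finite_subset)
  next
    case 3
    have "{a. p a \<noteq> 0 \<and> q (c - a) \<noteq> 0} \<subseteq> gp ` {n. gp n \<le> c - gq 0}"
    proof
      fix a assume a: "a \<in> {a. p a \<noteq> 0 \<and> q (c - a) \<noteq> 0}"
      then obtain n where n: "a = gp n" using 3 by auto
      obtain m where m: "c - a = gq m" using 3 a by auto
      have "gq 0 \<le> gq m" using 3 by (meson strict_mono_mono monoD le0)
      then have "gp n \<le> c - gq 0" using n m by (simp add: algebra_simps)
      then show "a \<in> gp ` {n. gp n \<le> c - gq 0}" using n by auto
    qed
    then show ?thesis using finite_below[OF wo 3(1)] by (meson finite_imageI finite_subset)
  qed
qed

lemma sum_in_S: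
  "semidomain S \<Longrightarrow> (\<forall>x\<in>F. t x \<in> S) \<Longrightarrow> sum t F \<in> S"
proof (induction F rule: infinite_finite_induct)
  case (insert x F)
  then show ?case unfolding semidomain_def by auto
qed (auto simp: semidomain_def)

lemma sum_nonzero:
  assumes sd: "semidomain S" and ar: "additively_reduced S"
    and "finite F" "F \<noteq> {}" "\<forall>x\<in>F. t x \<in> S \<and> t x \<noteq> 0"
  shows "sum t F \<noteq> 0"
  using assms(3-5)
proof (induction F rule: finite_ne_induct)
  case (singleton x) then show ?case by simp
next
  case (insert x F)
  have "\<forall>y\<in>F. t y \<in> S" using insert.prems by auto
  then have "sum t F \<in> S" by (rule sum_in_S[OF sd])
  moreover have "t x \<in> S" "t x \<noteq> 0" using insert by auto
  ultimately show ?case using insert ar unfolding additively_reduced_def by auto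
qed

lemma mult_nonzero:
  fixes p q :: "'g::linordered_ab_group_add \<Rightarrow> 'a::idom"
  assumes wo: "bdd_below_well_ordered TYPE('g)" and sd: "semidomain S"
    and ar: "additively_reduced S"
    and p: "p \<in> gen_series S" and q: "q \<in> gen_series S"
    and "p b \<noteq> 0" "q c \<noteq> 0"
  shows "series_mult p q (b + c) \<noteq> 0"
  unfolding series_mult_def
proof (rule sum_nonzero[OF sd ar])
  show "finite {a. p a \<noteq> 0 \<and> q (b + c - a) \<noteq> 0}" by (rule mult_finite[OF wo p q])
  show "{a. p a \<noteq> 0 \<and> q (b + c - a) \<noteq> 0} \<noteq> {}" using assms(6,7)
    by (auto intro!: exI[of _ b])
  have "\<forall>h. p h \<in> S" "\<forall>h. q h \<in> S" using p q unfolding gen_series_def by auto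
  then show "\<forall>x\<in>{a. p a \<noteq> 0 \<and> q (b + c - a) \<noteq> 0}. p x * q (b + c - x) \<in> S \<and> p x * q (b + c - x) \<noteq> 0"
    using sd unfolding semidomain_def by auto
qed

lemma core:
  fixes p q :: "'g::linordered_ab_group_add \<Rightarrow> 'a::idom" and g :: "nat \<Rightarrow> 'g"
  assumes P: "\<forall>b c. p b \<noteq> 0 \<longrightarrow> q c \<noteq> 0 \<longrightarrow> b + c \<in> range g"
    and sm: "strict_mono g"
    and K: "\<forall>j j'. K \<le> j \<longrightarrow> j < j' \<longrightarrow> g j' - g j > b1 - b0"
    and b: "p b0 \<noteq> 0" "p b1 \<noteq> 0" "b0 < b1"
    and inf: "infinite {c. q c \<noteq> 0}"
  shows False
proof -
  have "finite ((\<lambda>j. g j - b0) ` {..<K})" by (rule finite_imageI) simp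
  then obtain c where c: "q c \<noteq> 0" "c \<notin> (\<lambda>j. g j - b0) ` {..<K}"
    using inf by (metis (mono_tags, lifting) finite_subset mem_Collect_eq subsetI)
  obtain j where j: "b0 + c = g j" using P b c by blast
  have jK: "K \<le> j"
  proof (rule ccontr)
    assume "\<not> K \<le> j"
    then have "c = g j - b0" "j \<in> {..<K}" using j by (auto simp: algebra_simps)
    then show False using c by auto
  qed
  obtain j' where j': "b1 + c = g j'" using P b c by blast
  have "b0 + c < b1 + c" using b by simp
  then have "g j < g j'" using j j' by simp
  then have "j < j'" using sm by (simp add: strict_mono_less)
  then have "g j' - g j > b1 - b0" using K jK by blast
  moreover have "g j' - g j = (b1 + c) - (b0 + c)" using j j' by simp
  moreover have "(b1 + c) - (b0 + c) = b1 - b0" by simp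
  ultimately show False by simp
qed

lemma two_points:
  assumes "\<not> is_monomial p"
  shows "\<exists>b0 b1. p b0 \<noteq> 0 \<and> p b1 \<noteq> 0 \<and> b0 < (b1::'g::linorder)"
proof -
  obtain b where b: "p b \<noteq> 0" using assms unfolding is_monomial_def by blast
  obtain b' where b': "b' \<noteq> b" "p b' \<noteq> 0" using assms unfolding is_monomial_def by blast
  show ?thesis
  proof (cases "b < b'")
    case True then show ?thesis using b b' by blast
  next
    case False then have "b' < b" using b' by auto
    then show ?thesis using b b' by blast
  qed
qed

theorem corollary4p5:
  fixes S :: "'a::idom set"
    and s :: "nat \<Rightarrow> 'a"
    and g :: "nat \<Rightarrow> 'g::linordered_ab_group_add"
    and f :: "'g \<Rightarrow> 'a"
  assumes "semidomain S"
    and "additively_reduced S"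
    and "\<forall>(n::nat) (x::'g). n > 0 \<longrightarrow> (\<Sum>_<n. x) = 0 \<longrightarrow> x = 0"
    and "bdd_below_well_ordered TYPE('g)"
    and "\<forall>i. s i \<in> S \<and> s i \<noteq> 0"
    and "strict_mono g"
    and "f = (\<lambda>h. if h \<in> range g then s (THE i. g i = h) else 0)"
    and "\<exists>N. strict_mono (\<lambda>i. g (N + i + 1) - g (N + i))"
  shows "monolithic S f"
proof -
  note sd = assms(1) and ar = assms(2) and wo = assms(4) and sm = assms(6)
  have fnz: "f h \<noteq> 0 \<longleftrightarrow> h \<in> range g" for h
    using assms(5,7) by auto
  have gapK: "\<exists>K. \<forall>j j'. K \<le> j \<longrightarrow> j < j' \<longrightarrow> g j' - g j > \<delta>" if "\<delta> > 0" for \<delta>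
  proof -
    obtain N where N: "strict_mono (\<lambda>i. g (N + i + 1) - g (N + i))" using assms(8) by blast
    define d where "d = (\<lambda>i. g (N + i + 1) - g (N + i))"
    have dsm: "strict_mono d" using N d_def by simp
    obtain M where M: "d M > \<delta>"
    proof (rule ccontr)
      assume "\<not> thesis"
      then have "\<forall>i. d i \<le> \<delta>" using that by (meson not_le)
      then show False using no_bounded_smono[OF wo dsm] by blast
    qed
    show ?thesis
    proof (intro exI allI impI)
      fix j j' assume jj: "N + M \<le> j" "j < j'"
      have "g (j + 1) \<le> g j'" proof -
        have "j + 1 \<le> j'" using jj by simp
        then show ?thesis using sm by (meson strict_mono_mono monoD)
      qed
      moreover have "d (j - N) \<ge> d M" using dsm jj by (simp add: strict_mono_less_eq)
      moreover have "d (j - N) = g (j + 1) - g j" using jj by (simp add: d_def)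
      ultimately have "g j' - g j \<ge> d M" by (metis diff_right_mono order_trans)
      then show "g j' - g j > \<delta>" using M by simp
    qed
  qed
  have P: "b + c \<in> range g" if pq: "p \<in> gen_series S" "q \<in> gen_series S" "f = series_mult p q"
      and "p b \<noteq> 0" "q c \<noteq> 0" for p q b c
    using mult_nonzero[OF wo sd ar pq(1,2) that(4,5)] fnz pq(3) by metis
  have infsupp: "infinite {c. p c \<noteq> 0} \<or> infinite {c. q c \<noteq> 0}"
    if pq: "f = series_mult p q" for p q :: "'g \<Rightarrow> 'a"
  proof (rule ccontr)
    assume "\<not> ?thesis"
    then have fin: "finite ({c. p c \<noteq> 0} \<times> {c. q c \<noteq> 0})" by auto
    have "range g \<subseteq> (\<lambda>(a, b). a + b) ` ({c. p c \<noteq> 0} \<times> {c. q c \<noteq> 0})"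
    proof
      fix h assume "h \<in> range g"
      then have "series_mult p q h \<noteq> 0" using fnz pq by metis
      then obtain a where "p a \<noteq> 0" "q (h - a) \<noteq> 0" unfolding series_mult_def
        by (metis (mono_tags, lifting) Collect_empty_eq sum.empty)
      then show "h \<in> (\<lambda>(a, b). a + b) ` ({c. p c \<noteq> 0} \<times> {c. q c \<noteq> 0})"
        by (auto intro!: image_eqI[where x="(a, h - a)"])
    qed
    moreover have "infinite (range g)" using sm strict_mono_imp_inj_on
      by (metis finite_imageD infinite_UNIV_nat)
    ultimately show False using fin by (meson finite_imageI finite_subset)
  qed
  show ?thesis
    unfolding monolithic_def
  proof (intro conjI ballI impI)
    show "f \<noteq> (\<lambda>_. 0)" using fnz by (metis rangeI)
  next
    fix p q assume p: "p \<in> gen_series S" and q: "q \<in> gen_series S" and pq: "f = series_mult p q"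
    show "is_monomial p \<or> is_monomial q"
    proof (rule ccontr)
      assume nm: "\<not> (is_monomial p \<or> is_monomial q)"
      have P1: "\<forall>b c. p b \<noteq> 0 \<longrightarrow> q c \<noteq> 0 \<longrightarrow> b + c \<in> range g" using P[OF p q pq] by blast
      have P2: "\<forall>b c. q b \<noteq> 0 \<longrightarrow> p c \<noteq> 0 \<longrightarrow> b + c \<in> range g" using P1 by (metis add.commute)
      from infsupp[OF pq] show False
      proof
        assume iq: "infinite {c. p c \<noteq> 0}"
        obtain b0 b1 where b: "q b0 \<noteq> 0" "q b1 \<noteq> 0" "b0 < b1" using two_points nm by blast
        obtain K where "\<forall>j j'. K \<le> j \<longrightarrow> j < j' \<longrightarrow> g j' - g j > b1 - b0" using gapK b by fastforce
        then show False using core[OF P2 sm _ b iq] by blast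
      next
        assume iq: "infinite {c. q c \<noteq> 0}"
        obtain b0 b1 where b: "p b0 \<noteq> 0" "p b1 \<noteq> 0" "b0 < b1" using two_points nm by blast
        obtain K where "\<forall>j j'. K \<le> j \<longrightarrow> j < j' \<longrightarrow> g j' - g j > b1 - b0" using gapK b by fastforce
        then show False using core[OF P1 sm _ b iq] by blast
      qed
    qed
  qed
qed

end
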